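(* If $\Lambda=T_1\sqcup\cdots\sqcup T_m$ is a partition of $\Lambda$ into pairwise disjoint nonempty tilings $T_1,\dots,T_m$, then $m\le n-2$.
   Context: Fix an integer $n\ge 3$ and write $[n]=\{1,\dots,n\}$. Let $\Lambda$ be the set of 3-element subsets of $[n]$; a triple $\{i,j,k\}$ with $i<j<k$ is written $ijk$. For a 4-element subset $F=\{i<j<k<l\}$ of $[n]$, the stick of $F$ is the sequence $(ijk,\ ijl,\ ikl,\ jkl)$. A tiling (the inversion set of a rhombus tiling of the zonogon $Z(n;2)$) is a subset $T\subseteq\Lambda$ such that for every 4-element $F\subseteq[n]$, $T\cap\mathrm{stick}(F)$ is an initial segment or a final segment of the stick (empty set and whole stick allowed). *)

theory Defs
  imports Main
begin

definition Lambda :: "nat \<Rightarrow> nat set set" where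
  "Lambda n = {S. S \<subseteq> {1..n} \<and> card S = 3}"

definition stick :: "nat set \<Rightarrow> nat set list" where
  "stick F = (let xs = sorted_list_of_set F;
                  i = xs ! 0; j = xs ! 1; k = xs ! 2; l = xs ! 3
              in [{i,j,k}, {i,j,l}, {i,k,l}, {j,k,l}])"

definition is_tiling :: "nat \<Rightarrow> nat set set \<Rightarrow> bool" where
  "is_tiling n T \<longleftrightarrow> T \<subseteq> Lambda n \<and>
     (\<forall>F. F \<subseteq> {1..n} \<longrightarrow> card F = 4 \<longrightarrow>
        (\<exists>r\<le>4. T \<inter> set (stick F) = set (take r (stick F))
               \<or> T \<inter> set (stick F) = set (drop r (stick F))))"

end

theory Submission
  imports Defs
begin

lemma sl4:
  fixes i j k l :: nat
  assumes "i < j" "j < k" "k < l"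
  shows "sorted_list_of_set {i,j,k,l} = [i,j,k,l]"
  using sorted_list_of_set_unique[of "{i,j,k,l}" "[i,j,k,l]"] assms by auto

lemma stick4:
  fixes i j k l :: nat
  assumes "i < j" "j < k" "k < l"
  shows "stick {i,j,k,l} = [{i,j,k},{i,j,l},{i,k,l},{j,k,l}]"
  using sl4[OF assms] unfolding stick_def by (simp add: Let_def)

lemma inL:
  fixes i j k N :: nat
  assumes "1 \<le> i" "i < j" "j < k" "k \<le> N"
  shows "{i,j,k} \<in> Lambda N"
  using assms unfolding Lambda_def by auto

lemma stick_prop:
  fixes i j k l n :: nat
  assumes til: "is_tiling n T" and o: "i < j" "j < k" "k < l" "1 \<le> i" "l \<le> n"
  shows "({i,j,l} \<in> T \<longrightarrow> {i,j,k} \<notin> T \<longrightarrow> {i,k,l} \<in> T \<and> {j,k,l} \<in> T) \<and>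
         ({i,k,l} \<in> T \<longrightarrow> {i,j,k} \<notin> T \<longrightarrow> {j,k,l} \<in> T)"
proof -
  let ?F = "{i,j,k,l}"
  have F: "?F \<subseteq> {1..n}" using o by auto
  have c: "card ?F = 4" using o by auto
  obtain r where r: "r \<le> 4" and E: "T \<inter> set (stick ?F) = set (take r (stick ?F))
               \<or> T \<inter> set (stick ?F) = set (drop r (stick ?F))"
    using til F c unfolding is_tiling_def by blast
  have d: "{i,j,k} \<noteq> {i,j,l}" "{i,j,k} \<noteq> {i,k,l}" "{i,j,k} \<noteq> {j,k,l}"
          "{i,j,l} \<noteq> {i,k,l}" "{i,j,l} \<noteq> {j,k,l}" "{i,k,l} \<noteq> {j,k,l}"
    using o by (auto simp: insert_eq_iff doubleton_eq_iff)
  define A where "A = {i,j,k}"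
  define B where "B = {i,j,l}"
  define C where "C = {i,k,l}"
  define D where "D = {j,k,l}"
  have st: "stick ?F = [A,B,C,D]" unfolding A_def B_def C_def D_def using stick4[OF o(1-3)] .
  have d': "A \<noteq> B" "A \<noteq> C" "A \<noteq> D" "B \<noteq> C" "B \<noteq> D" "C \<noteq> D"
    using d unfolding A_def B_def C_def D_def by auto
  have key: "\<And>S. T \<inter> {A,B,C,D} = S \<Longrightarrow> (A \<in> T \<longleftrightarrow> A \<in> S) \<and> (B \<in> T \<longleftrightarrow> B \<in> S)
     \<and> (C \<in> T \<longleftrightarrow> C \<in> S) \<and> (D \<in> T \<longleftrightarrow> D \<in> S)" by blast
  have "r = 0 \<or> r = 1 \<or> r = 2 \<or> r = 3 \<or> r = 4" using r by auto
  then have "T \<inter> {A,B,C,D} \<in> {{}, {A}, {A,B}, {A,B,C}, {A,B,C,D}, {B,C,D}, {C,D}, {D}}"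
    using E unfolding st by (elim disjE; simp add: numeral_eq_Suc)
  then have "(B \<in> T \<longrightarrow> A \<notin> T \<longrightarrow> C \<in> T \<and> D \<in> T) \<and> (C \<in> T \<longrightarrow> A \<notin> T \<longrightarrow> D \<in> T)"
  proof (elim insertE emptyE)
  qed (use key d' in blast)+
  then show ?thesis unfolding A_def B_def C_def D_def .
qed

lemma key_new:
  fixes i j K n :: nat
  assumes til: "is_tiling n T" and o: "1 \<le> i" "i < j" "j < K" "K \<le> n" "4 \<le> K"
    and t: "{i,j,K} \<in> T" and none: "\<forall>x\<in>Lambda (K-1). x \<notin> T"
  shows "{K-2,K-1,K} \<in> T"
proof -
  obtain j' where j': "1 \<le> j'" "j' < K-1" "{j',K-1,K} \<in> T"
  proof (cases "j = K-1")
    case True then show ?thesis using that[of i] o t by auto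
  next
    case False
    have "{i,j,K-1} \<notin> T" using none inL[of i j "K-1" "K-1"] o False by auto
    then have "{j,K-1,K} \<in> T"
      using stick_prop[OF til, of i j "K-1" K] o False t by auto
    then show ?thesis using that[of j] o False by auto
  qed
  show ?thesis
  proof (cases "j' = K-2")
    case True then show ?thesis using j' by simp
  next
    case False
    have "{j',K-2,K-1} \<notin> T" using none inL[of j' "K-2" "K-1" "K-1"] o False j' by auto
    then show ?thesis
      using stick_prop[OF til, of j' "K-2" "K-1" K] o False j' by auto
  qed
qed

lemma Lambda3: "Lambda 3 = {{1,2,3}}"
proof -
  have "S = {1,2,3}" if "S \<subseteq> {1..3}" "card S = 3" for S :: "nat set"
  proof -
    have "{1..3::nat} = {1,2,3}" by auto
    then show ?thesis using that card_subset_eq[of "{1..3::nat}" S] by auto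
  qed
  then show ?thesis unfolding Lambda_def by auto
qed

lemma Lambda_mono: "k \<le> N \<Longrightarrow> Lambda k \<subseteq> Lambda N"
  unfolding Lambda_def by auto

theorem mainTheorem13:
  fixes n m :: nat and T :: "nat \<Rightarrow> nat set set"
  assumes "n \<ge> 3"
    and "\<And>a. a \<in> {1..m} \<Longrightarrow> is_tiling n (T a)"
    and "\<And>a. a \<in> {1..m} \<Longrightarrow> T a \<noteq> {}"
    and "\<And>a b. a \<in> {1..m} \<Longrightarrow> b \<in> {1..m} \<Longrightarrow> a \<noteq> b \<Longrightarrow> T a \<inter> T b = {}"
    and "(\<Union>a\<in>{1..m}. T a) = Lambda n"
  shows "m \<le> n - 2"
proof -
  define C where "C k = {a \<in> {1..m}. T a \<inter> Lambda k \<noteq> {}}" for k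
  have fin: "finite (C k)" for k unfolding C_def by auto
  have sub: "T a \<subseteq> Lambda n" if "a \<in> {1..m}" for a
    using assms(2)[OF that] unfolding is_tiling_def by auto
  have main: "card (C k) \<le> k - 2" if "3 \<le> k" "k \<le> n" for k
    using that
  proof (induction k rule: nat_induct_at_least)
    case base
    have "card (C 3) \<le> Suc 0"
      unfolding card_le_Suc0_iff_eq[OF fin]
    proof (intro ballI)
      fix a b assume ab: "a \<in> C 3" "b \<in> C 3"
      then have "{1,2,3} \<in> T a" "{1,2,3} \<in> T b" unfolding C_def Lambda3 by auto
      then show "a = b" using assms(4) ab unfolding C_def by blast
    qed
    then show ?case by simp
  next
    case (Suc k)
    have "{k-1,k,Suc k} \<in> Lambda n" using Suc inL[of "k-1" k "Suc k" n] by auto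
    then obtain c where c: "c \<in> {1..m}" "{k-1,k,Suc k} \<in> T c" using assms(5) by blast
    have "C (Suc k) \<subseteq> insert c (C k)"
    proof
      fix a assume a: "a \<in> C (Suc k)"
      show "a \<in> insert c (C k)"
      proof (rule ccontr)
        assume na: "a \<notin> insert c (C k)"
        have am: "a \<in> {1..m}" using a unfolding C_def by auto
        obtain t where t: "t \<in> T a" "t \<in> Lambda (Suc k)" using a unfolding C_def by auto
        have none: "\<forall>x\<in>Lambda k. x \<notin> T a" using na am unfolding C_def by auto
        have "t \<notin> Lambda k" using none t by auto
        then have tK: "Suc k \<in> t" using t(2) unfolding Lambda_def
          by (auto simp: subset_iff le_Suc_eq)
        have "card (t - {Suc k}) = 2" using t(2) tK unfolding Lambda_def
          by (auto simp: card_Diff_singleton)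
        then obtain x y where xy: "t - {Suc k} = {x,y}" "x \<noteq> y" by (auto simp: card_2_iff)
        have xyr: "1 \<le> x" "x < Suc k" "1 \<le> y" "y < Suc k"
        proof -
          have "x \<in> t" "x \<noteq> Suc k" "y \<in> t" "y \<noteq> Suc k" using xy(1) by blast+
          then show "1 \<le> x" "x < Suc k" "1 \<le> y" "y < Suc k"
            using t(2) unfolding Lambda_def by (auto simp: subset_iff)
        qed
        have teq: "t = {x,y,Suc k}" using xy tK by auto
        obtain i j where ij: "1 \<le> i" "i < j" "j < Suc k" "{i,j,Suc k} \<in> T a"
        proof (cases "x < y")
          case True then show ?thesis using that[of x y] xyr teq t by auto
        next
          case False then show ?thesis using that[of y x] xyr teq t xy(2)
            by (auto simp: insert_commute)
        qed
        have "{Suc k - 2, Suc k - 1, Suc k} \<in> T a"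
          using key_new[OF assms(2)[OF am], of i j "Suc k"] ij none Suc by auto
        then have "{k-1,k,Suc k} \<in> T a" by (simp add: numeral_eq_Suc)
        then have "a = c" using c assms(4)[OF am c(1)] by blast
        then show False using na by simp
      qed
    qed
    then have "card (C (Suc k)) \<le> card (insert c (C k))" by (simp add: card_mono fin)
    also have "\<dots> \<le> Suc (card (C k))" by (simp add: card_insert_le_m1 card_insert_if fin)
    finally show ?case using Suc by auto
  qed
  have "C n = {1..m}" unfolding C_def using sub assms(3) by blast
  then show ?thesis using main[of n] assms(1) by simp
qed

end
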